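(* Let $C_n$ be the cycle on $n\ge 3$ vertices. (1) If $n$ is odd, then $\mathcal{Z}^{\mathrm{TE}}_-(C_n)\cong K_n$ and $\mathcal{Z}^{\mathrm{TS}}_-(C_n)\cong C_n$. (2) If $n$ is even, then $\mathcal{Z}^{\mathrm{TE}}_-(C_n)\cong K_{n/2}\,\square\,K_{n/2}$ and $\mathcal{Z}^{\mathrm{TS}}_-(C_n)\cong \frac{n^2}{4}K_1$ (the edgeless graph on $n^2/4$ vertices).
   Context: $\square$ denotes the Cartesian product. Skew forcing: vertices are colored blue or white; if any vertex $u$ (blue or white) has exactly one white neighbor $v$, then $u$ may force $v$ to become blue. A skew forcing set is a (possibly empty) set of initially blue vertices from which repeated application of this rule turns every vertex blue; $\mathrm{Z}_-(G)$ is the minimum size of a skew forcing set. $\mathcal{Z}^{\mathrm{TE}}_-(G)$ has as vertices the minimum skew forcing sets of $G$, with $S_1S_2$ an edge iff $S_1\setminus S_2=\{v_1\}$ and $S_2\setminus S_1=\{v_2\}$ for some vertices $v_1,v_2$; $\mathcal{Z}^{\mathrm{TS}}_-(G)$ has the same vertices with the additional requirement $v_1v_2\in E(G)$. *)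

theory Defs
  imports Main
begin

text \<open>Simple graphs are given by a vertex set V and a symmetric irreflexive
adjacency predicate E.\<close>

definition graph_iso :: "'a set \<Rightarrow> ('a \<Rightarrow> 'a \<Rightarrow> bool) \<Rightarrow> 'b set \<Rightarrow> ('b \<Rightarrow> 'b \<Rightarrow> bool) \<Rightarrow> bool" where
  "graph_iso V1 E1 V2 E2 \<longleftrightarrow>
     (\<exists>f. bij_betw f V1 V2 \<and> (\<forall>x\<in>V1. \<forall>y\<in>V1. E1 x y \<longleftrightarrow> E2 (f x) (f y)))"

text \<open>One skew forcing step: some vertex u (blue or white) has exactly one white
neighbour v, which becomes blue.\<close>
definition skew_step :: "'a set \<Rightarrow> ('a \<Rightarrow> 'a \<Rightarrow> bool) \<Rightarrow> 'a set \<Rightarrow> 'a set \<Rightarrow> bool" where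
  "skew_step V E B B' \<longleftrightarrow>
     (\<exists>u\<in>V. \<exists>v. {w \<in> V. E u w \<and> w \<notin> B} = {v} \<and> B' = insert v B)"

definition skew_forcing_set :: "'a set \<Rightarrow> ('a \<Rightarrow> 'a \<Rightarrow> bool) \<Rightarrow> 'a set \<Rightarrow> bool" where
  "skew_forcing_set V E S \<longleftrightarrow> S \<subseteq> V \<and> (\<exists>B. (skew_step V E)\<^sup>*\<^sup>* S B \<and> V \<subseteq> B)"

definition Z_minus :: "'a set \<Rightarrow> ('a \<Rightarrow> 'a \<Rightarrow> bool) \<Rightarrow> nat" where
  "Z_minus V E = Min (card ` {S. skew_forcing_set V E S})"

definition min_skew_forcing_sets :: "'a set \<Rightarrow> ('a \<Rightarrow> 'a \<Rightarrow> bool) \<Rightarrow> 'a set set" where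
  "min_skew_forcing_sets V E = {S. skew_forcing_set V E S \<and> card S = Z_minus V E}"

text \<open>Token exchange graph: vertex set min_skew_forcing_sets V E.\<close>
definition skew_TE_edge :: "'a set \<Rightarrow> 'a set \<Rightarrow> bool" where
  "skew_TE_edge S1 S2 \<longleftrightarrow> (\<exists>v1 v2. S1 - S2 = {v1} \<and> S2 - S1 = {v2})"

definition skew_TS_edge :: "('a \<Rightarrow> 'a \<Rightarrow> bool) \<Rightarrow> 'a set \<Rightarrow> 'a set \<Rightarrow> bool" where
  "skew_TS_edge E S1 S2 \<longleftrightarrow> (\<exists>v1 v2. S1 - S2 = {v1} \<and> S2 - S1 = {v2} \<and> E v1 v2)"

definition cycle_V :: "nat \<Rightarrow> nat set" where "cycle_V n = {0..<n}"
definition cycle_E :: "nat \<Rightarrow> nat \<Rightarrow> nat \<Rightarrow> bool" where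
  "cycle_E n i j \<longleftrightarrow> j = (i + 1) mod n \<or> i = (j + 1) mod n"

definition complete_V :: "nat \<Rightarrow> nat set" where "complete_V n = {0..<n}"
definition complete_E :: "nat \<Rightarrow> nat \<Rightarrow> bool" where "complete_E i j \<longleftrightarrow> i \<noteq> j"

definition cart_V :: "'a set \<Rightarrow> 'b set \<Rightarrow> ('a \<times> 'b) set" where "cart_V V1 V2 = V1 \<times> V2"
definition cart_E :: "('a \<Rightarrow> 'a \<Rightarrow> bool) \<Rightarrow> ('b \<Rightarrow> 'b \<Rightarrow> bool) \<Rightarrow> 'a \<times> 'b \<Rightarrow> 'a \<times> 'b \<Rightarrow> bool" where
  "cart_E E1 E2 p q \<longleftrightarrow> (E1 (fst p) (fst q) \<and> snd p = snd q) \<or> (fst p = fst q \<and> E2 (snd p) (snd q))"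

definition empty_V :: "nat \<Rightarrow> nat set" where "empty_V m = {0..<m}"
definition empty_E :: "nat \<Rightarrow> nat \<Rightarrow> bool" where "empty_E i j \<longleftrightarrow> False"

end

theory Submission
  imports Defs
begin


lemma pred_iff:
  assumes "(n::nat) \<ge> 3" "u < n" "w < n"
  shows "(u = (w+1) mod n) \<longleftrightarrow> (w = (u+n-1) mod n)"
proof (cases "w + 1 = n")
  case True
  then show ?thesis using assms by (cases "u = 0") (auto simp: mod_if)
next
  case False
  then show ?thesis using assms by (cases "u = 0") (auto simp: mod_if)
qed

lemma cyc_nbr:
  assumes "(n::nat) \<ge> 3" "u < n" "w < n"
  shows "cycle_E n u w \<longleftrightarrow> (w = (u+1) mod n \<or> w = (u+n-1) mod n)"
  using pred_iff[OF assms] unfolding cycle_E_def by blast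

lemma nbr_distinct:
  assumes "(n::nat) \<ge> 3" "u < n"
  shows "(u+1) mod n \<noteq> (u+n-1) mod n"
  using assms by (cases "u = 0"; cases "u+1 = n") (auto simp: mod_if)

lemma back_x:
  assumes "(n::nat) \<ge> 3" "x < n"
  shows "((x+1) mod n + n - 1) mod n = x"
  using assms by (cases "x+1 = n") (auto simp: mod_if)

lemma even_mod_evenn: "even (n::nat) \<Longrightarrow> even (x mod n) \<longleftrightarrow> even x"
  by (metis dvd_mod_iff even_mod_2_iff mod_mod_cancel)


lemma inv_parity:
  assumes "(skew_step {0..<n} (cycle_E n))\<^sup>*\<^sup>* S B" "(n::nat) \<ge> 3"
    "\<forall>u<n. ((u+1) mod n \<in> P \<longleftrightarrow> (u+n-1) mod n \<in> P)" "S \<inter> P = {}"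
  shows "B \<inter> P = {}"
  using assms(1)
proof (induction rule: rtranclp_induct)
  case base then show ?case using assms(4) .
next
  case (step B B')
  from step.hyps(2) obtain u v where u: "u < n"
    and sv: "{w \<in> {0..<n}. cycle_E n u w \<and> w \<notin> B} = {v}" and B': "B' = insert v B"
    unfolding skew_step_def by auto
  have "v \<notin> P"
  proof
    assume vP: "v \<in> P"
    have v: "v < n" "cycle_E n u v" using sv by auto
    hence vv: "v = (u+1) mod n \<or> v = (u+n-1) mod n" using cyc_nbr[OF assms(2) u] by blast
    have eqv: "(u+1) mod n \<in> P \<longleftrightarrow> (u+n-1) mod n \<in> P" using assms(3) u by blast
    have both: "(u+1) mod n \<in> P" "(u+n-1) mod n \<in> P" using vv vP eqv by auto
    have lt: "(u+1) mod n < n" "(u+n-1) mod n < n" using assms(2) by auto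
    have c1: "cycle_E n u ((u+1) mod n)" "cycle_E n u ((u+n-1) mod n)"
      using cyc_nbr[OF assms(2) u lt(1)] cyc_nbr[OF assms(2) u lt(2)] by blast+
    have nb: "(u+1) mod n \<notin> B" "(u+n-1) mod n \<notin> B" using both step.IH by blast+
    have m1: "(u+1) mod n \<in> {w \<in> {0..<n}. cycle_E n u w \<and> w \<notin> B}"
      using c1 nb lt by simp
    have m2: "(u+n-1) mod n \<in> {w \<in> {0..<n}. cycle_E n u w \<and> w \<notin> B}"
      using c1 nb lt by simp
    have "(u+1) mod n = v" using m1[unfolded sv] by simp
    moreover have "(u+n-1) mod n = v" using m2[unfolded sv] by simp
    ultimately show False using nbr_distinct[OF assms(2) u] by simp
  qed
  then show ?case using B' step.IH by auto
qed

lemma force2: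
  assumes "(n::nat) \<ge> 3" "x \<in> B" "x < n"
  shows "(skew_step {0..<n} (cycle_E n))\<^sup>*\<^sup>* B (insert ((x+2) mod n) B)"
proof (cases "(x+2) mod n \<in> B")
  case True then show ?thesis by (simp add: insert_absorb)
next
  case False
  define u where "u = (x+1) mod n"
  have u: "u < n" using assms u_def by auto
  have e1: "(u+1) mod n = (x+2) mod n" unfolding u_def by (simp add: mod_Suc_eq)
  have e2: "(u+n-1) mod n = x" unfolding u_def using back_x[OF assms(1) assms(3)] .
  have st: "{w \<in> {0..<n}. cycle_E n u w \<and> w \<notin> B} = {(x+2) mod n}"
    using cyc_nbr[OF assms(1) u] e1 e2 assms False by auto
  have "skew_step {0..<n} (cycle_E n) B (insert ((x+2) mod n) B)"
    unfolding skew_step_def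
    apply (rule bexI[of _ u])
    using st u by auto
  then show ?thesis by auto
qed

lemma orbit:
  assumes "(n::nat) \<ge> 3" "x < n" "(skew_step {0..<n} (cycle_E n))\<^sup>*\<^sup>* B B'" "x \<in> B'"
  shows "(skew_step {0..<n} (cycle_E n))\<^sup>*\<^sup>* B (B' \<union> {(x + 2*j) mod n | j. j \<le> k})"
proof (induction k)
  case 0
  have "B' \<union> {(x + 2*j) mod n | j. j \<le> (0::nat)} = B'" using assms by auto
  then show ?case using assms by simp
next
  case (Suc k)
  define C where "C = B' \<union> {(x + 2*j) mod n | j. j \<le> k}"
  define y where "y = (x + 2*k) mod n"
  have y: "y \<in> C" "y < n" unfolding C_def y_def using assms by auto
  have "(skew_step {0..<n} (cycle_E n))\<^sup>*\<^sup>* C (insert ((y+2) mod n) C)"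
    using force2[OF assms(1) y] .
  moreover have "(y+2) mod n = (x + 2 * k + 2) mod n" unfolding y_def by (rule mod_add_left_eq)
  moreover have "x + 2 * k + 2 = x + 2 * Suc k" by simp
  moreover have "{(x + 2*j) mod n | j. j \<le> Suc k} = insert ((x + 2 * Suc k) mod n) {(x + 2*j) mod n | j. j \<le> k}"
  proof (rule set_eqI, rule iffI)
    fix z assume "z \<in> {(x + 2*j) mod n | j. j \<le> Suc k}"
    then obtain j where "z = (x + 2*j) mod n" "j \<le> Suc k" by blast
    then show "z \<in> insert ((x + 2 * Suc k) mod n) {(x + 2*j) mod n | j. j \<le> k}"
      by (cases "j = Suc k") auto
  next
    fix z assume "z \<in> insert ((x + 2 * Suc k) mod n) {(x + 2*j) mod n | j. j \<le> k}"
    then show "z \<in> {(x + 2*j) mod n | j. j \<le> Suc k}"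
    proof
      assume "z = (x + 2 * Suc k) mod n" then show ?thesis by blast
    next
      assume "z \<in> {(x + 2*j) mod n | j. j \<le> k}" then show ?thesis by (auto intro: le_SucI)
    qed
  qed
  ultimately show ?case using Suc.IH unfolding C_def by (simp add: insert_commute)
qed

lemma cover:
  assumes "(n::nat) \<ge> 3" "x < n" "v < n" "even (v+n-x) \<or> even (v+2*n-x)"
  shows "v \<in> {(x + 2*j) mod n | j. j \<le> 2*n}"
proof -
  from assms(4) show ?thesis
  proof
    assume "even (v+n-x)"
    then have "x + 2 * ((v+n-x) div 2) = v + n" using assms by auto
    then have "(x + 2 * ((v+n-x) div 2)) mod n = v" using assms by simp
    moreover have "(v+n-x) div 2 \<le> 2*n" using assms by auto
    ultimately have "\<exists>j. v = (x + 2*j) mod n \<and> j \<le> 2*n" by metis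
    then show ?thesis by simp
  next
    assume "even (v+2*n-x)"
    then have "x + 2 * ((v+2*n-x) div 2) = v + 2*n" using assms by auto
    then have "(x + 2 * ((v+2*n-x) div 2)) mod n = v" using assms by simp
    moreover have "(v+2*n-x) div 2 \<le> 2*n" using assms by auto
    ultimately have "\<exists>j. v = (x + 2*j) mod n \<and> j \<le> 2*n" by metis
    then show ?thesis by simp
  qed
qed


lemma sfs_sub: "skew_forcing_set V E S \<Longrightarrow> S \<subseteq> V"
  unfolding skew_forcing_set_def by blast

lemma sfs_orbit_cover:
  assumes "(n::nat) \<ge> 3" "x < n" "(skew_step {0..<n} (cycle_E n))\<^sup>*\<^sup>* B B'" "x \<in> B'"
  shows "\<exists>C. (skew_step {0..<n} (cycle_E n))\<^sup>*\<^sup>* B C \<and> B' \<subseteq> C \<and>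
     {v. v < n \<and> (even (v+n-x) \<or> even (v+2*n-x))} \<subseteq> C"
proof -
  let ?C = "B' \<union> {(x + 2*j) mod n | j. j \<le> 2*n}"
  have "(skew_step {0..<n} (cycle_E n))\<^sup>*\<^sup>* B ?C" using orbit[OF assms] .
  moreover have "{v. v < n \<and> (even (v+n-x) \<or> even (v+2*n-x))} \<subseteq> ?C"
    using cover[OF assms(1,2)] by blast
  ultimately show ?thesis by blast
qed

lemma odd_sfs_single:
  assumes "(n::nat) \<ge> 3" "odd n" "x < n"
  shows "skew_forcing_set (cycle_V n) (cycle_E n) {x}"
proof -
  obtain C where C: "(skew_step {0..<n} (cycle_E n))\<^sup>*\<^sup>* {x} C"
     "{v. v < n \<and> (even (v+n-x) \<or> even (v+2*n-x))} \<subseteq> C"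
    using sfs_orbit_cover[OF assms(1,3), of "{x}" "{x}"] by auto
  have "v \<in> C" if "v < n" for v
  proof -
    have "even (v+n-x) \<or> even (v+2*n-x)" using assms that by presburger
    then have "v \<in> {v. v < n \<and> (even (v+n-x) \<or> even (v+2*n-x))}" using that by blast
    then show ?thesis using C(2) by blast
  qed
  then have "{0..<n} \<subseteq> C" by auto
  then show ?thesis unfolding skew_forcing_set_def cycle_V_def using C(1) assms by auto
qed

lemma sfs_nonempty:
  assumes "(n::nat) \<ge> 3" "skew_forcing_set (cycle_V n) (cycle_E n) S"
  shows "S \<noteq> {}"
proof
  assume S: "S = {}"
  from assms(2) obtain B where B: "(skew_step {0..<n} (cycle_E n))\<^sup>*\<^sup>* S B" "{0..<n} \<subseteq> B"
    unfolding skew_forcing_set_def cycle_V_def by auto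
  have "B \<inter> {0..<n} = {}"
    by (rule inv_parity[OF B(1) assms(1)]) (use S in auto)
  moreover have "0 \<in> {0..<n}" using assms(1) by simp
  ultimately show False using B(2) by blast
qed

lemma even_sfs_pair:
  assumes "(n::nat) \<ge> 3" "even n" "a < n" "even a" "b < n" "odd b"
  shows "skew_forcing_set (cycle_V n) (cycle_E n) {a, b}"
proof -
  obtain C1 where C1: "(skew_step {0..<n} (cycle_E n))\<^sup>*\<^sup>* {a,b} C1" "{a,b} \<subseteq> C1"
     "{v. v < n \<and> (even (v+n-a) \<or> even (v+2*n-a))} \<subseteq> C1"
    using sfs_orbit_cover[OF assms(1,3), of "{a,b}" "{a,b}"] by auto
  obtain C2 where C2: "(skew_step {0..<n} (cycle_E n))\<^sup>*\<^sup>* {a,b} C2" "C1 \<subseteq> C2"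
     "{v. v < n \<and> (even (v+n-b) \<or> even (v+2*n-b))} \<subseteq> C2"
    using sfs_orbit_cover[OF assms(1,5) C1(1)] C1(2) by auto
  have "v \<in> C2" if "v < n" for v
  proof (cases "even v")
    case True
    then have "even (v+n-a)" using assms that by presburger
    then show ?thesis using C1(3) C2(2) that by auto
  next
    case False
    then have "even (v+n-b)" using assms that by presburger
    then show ?thesis using C2(3) that by auto
  qed
  then show ?thesis unfolding skew_forcing_set_def cycle_V_def using C2(1) assms by auto
qed

lemma even_sfs_has:
  assumes "(n::nat) \<ge> 3" "even n" "skew_forcing_set (cycle_V n) (cycle_E n) S"
  shows "(\<exists>a\<in>S. even a) \<and> (\<exists>b\<in>S. odd b)"
proof -
  from assms(3) obtain B where B: "(skew_step {0..<n} (cycle_E n))\<^sup>*\<^sup>* S B" "{0..<n} \<subseteq> B"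
    unfolding skew_forcing_set_def cycle_V_def by auto
  have par: "even ((u+1) mod n) \<longleftrightarrow> even ((u+n-1) mod n)" if "u < n" for u
  proof -
    have "even ((u+1) mod n) \<longleftrightarrow> even (u+1)" using even_mod_evenn[OF assms(2)] .
    moreover have "even ((u+n-1) mod n) \<longleftrightarrow> even (u+n-1)" using even_mod_evenn[OF assms(2)] .
    moreover have "even (u+1) \<longleftrightarrow> even (u+n-1)" using assms by presburger
    ultimately show ?thesis by simp
  qed
  have lt: "(u+1) mod n < n" "(u+n-1) mod n < n" for u using assms(1) by auto
  have "\<exists>a\<in>S. even a"
  proof (rule ccontr)
    assume "\<not> ?thesis"
    then have "S \<inter> {v. v < n \<and> even v} = {}" by auto
    then have "B \<inter> {v. v < n \<and> even v} = {}"
      by (intro inv_parity[OF B(1) assms(1)]) (use par lt in auto)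
    moreover have "0 \<in> B" using B(2) assms(1) by auto
    ultimately show False using assms(1) by auto
  qed
  moreover have "\<exists>b\<in>S. odd b"
  proof (rule ccontr)
    assume "\<not> ?thesis"
    then have "S \<inter> {v. v < n \<and> odd v} = {}" by auto
    then have "B \<inter> {v. v < n \<and> odd v} = {}"
      by (intro inv_parity[OF B(1) assms(1)]) (use par lt in auto)
    moreover have "1 \<in> B" using B(2) assms(1) by auto
    ultimately show False using assms(1) by auto
  qed
  ultimately show ?thesis by blast
qed

lemma Zmin:
  assumes "finite V" "skew_forcing_set V E S0" "card S0 = k" "\<And>S. skew_forcing_set V E S \<Longrightarrow> k \<le> card S"
  shows "Z_minus V E = k"
proof -
  have "{S. skew_forcing_set V E S} \<subseteq> Pow V" using sfs_sub by blast
  then have "finite {S. skew_forcing_set V E S}" using assms(1) finite_subset by blast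
  then show ?thesis unfolding Z_minus_def
    by (intro Min_eqI) (use assms in auto)
qed

lemma iso_rev:
  assumes "bij_betw g V2 V1" "\<And>x y. x \<in> V2 \<Longrightarrow> y \<in> V2 \<Longrightarrow> E1 (g x) (g y) \<longleftrightarrow> E2 x y"
  shows "graph_iso V1 E1 V2 E2"
proof -
  let ?f = "the_inv_into V2 g"
  have b: "bij_betw ?f V1 V2" using bij_betw_the_inv_into[OF assms(1)] .
  have "\<forall>x\<in>V1. \<forall>y\<in>V1. E1 x y \<longleftrightarrow> E2 (?f x) (?f y)"
  proof (intro ballI)
    fix x y assume xy: "x \<in> V1" "y \<in> V1"
    have "g (?f x) = x" "g (?f y) = y"
      using xy assms(1) by (auto simp: bij_betw_def f_the_inv_into_f)
    moreover have "?f x \<in> V2" "?f y \<in> V2" using b xy by (auto simp: bij_betw_def)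
    ultimately show "E1 x y \<longleftrightarrow> E2 (?f x) (?f y)" using assms(2) by metis
  qed
  then show ?thesis unfolding graph_iso_def using b by blast
qed



lemma odd_M:
  assumes "(n::nat) \<ge> 3" "odd n"
  shows "min_skew_forcing_sets (cycle_V n) (cycle_E n) = (\<lambda>v. {v}) ` {0..<n}"
proof -
  have Z: "Z_minus (cycle_V n) (cycle_E n) = 1"
  proof (rule Zmin)
    show "finite (cycle_V n)" by (simp add: cycle_V_def)
    show "skew_forcing_set (cycle_V n) (cycle_E n) {0}" using odd_sfs_single assms by simp
    show "card {0::nat} = 1" by simp
    fix S assume "skew_forcing_set (cycle_V n) (cycle_E n) S"
    moreover have "finite S" using sfs_sub[OF calculation] by (simp add: cycle_V_def finite_subset)
    ultimately show "1 \<le> card S" using sfs_nonempty[OF assms(1)] by (simp add: Suc_leI card_gt_0_iff)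
  qed
  show ?thesis
  proof (rule set_eqI, rule iffI)
    fix S assume "S \<in> min_skew_forcing_sets (cycle_V n) (cycle_E n)"
    then have S: "skew_forcing_set (cycle_V n) (cycle_E n) S" "card S = 1"
      unfolding min_skew_forcing_sets_def Z by auto
    then obtain x where x: "S = {x}" by (auto simp: card_Suc_eq)
    then have "x < n" using sfs_sub[OF S(1)] by (auto simp: cycle_V_def)
    then show "S \<in> (\<lambda>v. {v}) ` {0..<n}" using x by auto
  next
    fix S assume "S \<in> (\<lambda>v. {v}) ` {0..<n}"
    then obtain x where "x < n" "S = {x}" by auto
    then show "S \<in> min_skew_forcing_sets (cycle_V n) (cycle_E n)"
      unfolding min_skew_forcing_sets_def Z using odd_sfs_single assms by auto
  qed
qed

definition pairmap :: "nat \<times> nat \<Rightarrow> nat set" where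
  "pairmap p = {2 * fst p, 2 * snd p + 1}"

lemma even_M:
  assumes "(n::nat) \<ge> 3" "even n"
  shows "min_skew_forcing_sets (cycle_V n) (cycle_E n) = pairmap ` ({0..<n div 2} \<times> {0..<n div 2})"
proof -
  have Z: "Z_minus (cycle_V n) (cycle_E n) = 2"
  proof (rule Zmin)
    show "finite (cycle_V n)" by (simp add: cycle_V_def)
    show "skew_forcing_set (cycle_V n) (cycle_E n) {0,1}" using even_sfs_pair assms by simp
    show "card {0::nat,1} = 2" by simp
    fix S assume S: "skew_forcing_set (cycle_V n) (cycle_E n) S"
    have "finite S" using sfs_sub[OF S] by (simp add: cycle_V_def finite_subset)
    moreover obtain a b where "a \<in> S" "b \<in> S" "even a" "odd b" using even_sfs_has[OF assms S] by blast
    moreover have "a \<noteq> b" using calculation by auto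
    ultimately have "card {a,b} \<le> card S" by (intro card_mono) auto
    then show "2 \<le> card S" using \<open>a \<noteq> b\<close> by simp
  qed
  show ?thesis
  proof (rule set_eqI, rule iffI)
    fix S assume "S \<in> min_skew_forcing_sets (cycle_V n) (cycle_E n)"
    then have S: "skew_forcing_set (cycle_V n) (cycle_E n) S" "card S = 2"
      unfolding min_skew_forcing_sets_def Z by auto
    have fin: "finite S" using sfs_sub[OF S(1)] by (simp add: cycle_V_def finite_subset)
    obtain a b where ab: "a \<in> S" "b \<in> S" "even a" "odd b" using even_sfs_has[OF assms S(1)] by blast
    have "a \<noteq> b" using ab by auto
    then have "{a,b} = S" using ab fin S(2) by (intro card_subset_eq) auto
    moreover have "a < n" "b < n" using ab sfs_sub[OF S(1)] by (auto simp: cycle_V_def)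
    ultimately have "S = pairmap (a div 2, b div 2)" "a div 2 < n div 2" "b div 2 < n div 2"
      using ab assms by (auto simp: pairmap_def)
    then show "S \<in> pairmap ` ({0..<n div 2} \<times> {0..<n div 2})" by auto
  next
    fix S assume "S \<in> pairmap ` ({0..<n div 2} \<times> {0..<n div 2})"
    then obtain i j where ij: "i < n div 2" "j < n div 2" "S = {2*i, 2*j+1}"
      by (auto simp: pairmap_def)
    have "skew_forcing_set (cycle_V n) (cycle_E n) S"
      using ij even_sfs_pair[OF assms, of "2*i" "2*j+1"] assms by auto
    moreover have "2*i \<noteq> 2*j+1" by presburger
    moreover have "card S = 2" using ij calculation(2) by auto
    ultimately show "S \<in> min_skew_forcing_sets (cycle_V n) (cycle_E n)"
      unfolding min_skew_forcing_sets_def Z by auto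
  qed
qed


lemma TE_single: "skew_TE_edge {x} {y} \<longleftrightarrow> x \<noteq> y"
  unfolding skew_TE_edge_def by (cases "x = y") auto

lemma TS_single: "skew_TS_edge E {x} {y} \<longleftrightarrow> x \<noteq> y \<and> E x y"
  unfolding skew_TS_edge_def by (cases "x = y") auto

lemma cyc_irrefl: "(n::nat) \<ge> 3 \<Longrightarrow> x < n \<Longrightarrow> \<not> cycle_E n x x"
  unfolding cycle_E_def by (cases "x + 1 = n") auto

lemma pairmap_inj: "inj_on pairmap A"
proof (rule inj_onI)
  fix p q assume "pairmap p = pairmap q"
  then have "{2 * fst p, 2 * snd p + 1} = {2 * fst q, 2 * snd q + 1}" by (simp add: pairmap_def)
  moreover have "2 * fst p \<noteq> 2 * snd q + 1" "2 * snd p + 1 \<noteq> 2 * fst q" by presburger+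
  ultimately have "fst p = fst q" "snd p = snd q" by (auto simp: doubleton_eq_iff)
  then show "p = q" by (simp add: prod_eq_iff)
qed

lemma pair_diff:
  fixes a b a' b' :: nat
  assumes "even a" "even a'" "odd b" "odd b'"
  shows "{a,b} - {a',b'} = (if a = a' then {} else {a}) \<union> (if b = b' then {} else {b})"
  using assms by auto

lemma TE_pair:
  "skew_TE_edge (pairmap p) (pairmap q) \<longleftrightarrow> cart_E complete_E complete_E p q"
proof -
  obtain i j i' j' where pq: "p = (i,j)" "q = (i',j')" by (cases p, cases q) auto
  have d1: "pairmap p - pairmap q = (if i = i' then {} else {2*i}) \<union> (if j = j' then {} else {2*j+1})"
    unfolding pq pairmap_def fst_conv snd_conv using pair_diff[of "2*i" "2*i'" "2*j+1" "2*j'+1"] by simp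
  have d2: "pairmap q - pairmap p = (if i' = i then {} else {2*i'}) \<union> (if j' = j then {} else {2*j'+1})"
    unfolding pq pairmap_def fst_conv snd_conv using pair_diff[of "2*i'" "2*i" "2*j'+1" "2*j+1"] by simp
  have ne: "2*i \<noteq> 2*j+1" "2*i' \<noteq> 2*j'+1" by presburger+
  have r: "cart_E complete_E complete_E p q \<longleftrightarrow> (i \<noteq> i' \<and> j = j') \<or> (i = i' \<and> j \<noteq> j')"
    unfolding cart_E_def complete_E_def pq by auto
  have ne2: "{2*i, 2*j+1} \<noteq> {v}" for v using ne by auto
  have "skew_TE_edge (pairmap p) (pairmap q) \<longleftrightarrow> (i \<noteq> i' \<and> j = j') \<or> (i = i' \<and> j \<noteq> j')"
  proof (cases "i = i'"; cases "j = j'")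
    assume "i \<noteq> i'" "j \<noteq> j'"
    then show ?thesis unfolding skew_TE_edge_def d1 d2 using ne2 by (simp add: insert_commute)
  next
    assume "i = i'" "j = j'" then show ?thesis unfolding skew_TE_edge_def d1 d2 by simp
  next
    assume "i = i'" "j \<noteq> j'" then show ?thesis unfolding skew_TE_edge_def d1 d2 by simp
  next
    assume "i \<noteq> i'" "j = j'" then show ?thesis unfolding skew_TE_edge_def d1 d2 by simp
  qed
  then show ?thesis using r by simp
qed

lemma cyc_parity: "even (n::nat) \<Longrightarrow> n \<ge> 3 \<Longrightarrow> cycle_E n x y \<Longrightarrow> even x \<longleftrightarrow> odd y"
proof -
  assume a: "even n" "n \<ge> 3" "cycle_E n x y"
  have e1: "even ((x+1) mod n) \<longleftrightarrow> even (x+1)" using even_mod_evenn[OF a(1)] .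
  have e2: "even ((y+1) mod n) \<longleftrightarrow> even (y+1)" using even_mod_evenn[OF a(1)] .
  from a(3) have "y = (x+1) mod n \<or> x = (y+1) mod n" unfolding cycle_E_def .
  then show ?thesis
  proof
    assume "y = (x+1) mod n" then show ?thesis using e1 by simp
  next
    assume "x = (y+1) mod n" then show ?thesis using e2 by simp
  qed
qed

lemma TS_pair:
  assumes "even (n::nat)" "n \<ge> 3"
  shows "\<not> skew_TS_edge (cycle_E n) (pairmap p) (pairmap q)"
proof
  assume "skew_TS_edge (cycle_E n) (pairmap p) (pairmap q)"
  then obtain v1 v2 where v: "pairmap p - pairmap q = {v1}" "pairmap q - pairmap p = {v2}" "cycle_E n v1 v2"
    unfolding skew_TS_edge_def by blast
  obtain i j i' j' where pq: "p = (i,j)" "q = (i',j')" by (cases p, cases q) auto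
  have d1: "pairmap p - pairmap q = (if i = i' then {} else {2*i}) \<union> (if j = j' then {} else {2*j+1})"
    unfolding pq pairmap_def fst_conv snd_conv using pair_diff[of "2*i" "2*i'" "2*j+1" "2*j'+1"] by simp
  have d2: "pairmap q - pairmap p = (if i' = i then {} else {2*i'}) \<union> (if j' = j then {} else {2*j'+1})"
    unfolding pq pairmap_def fst_conv snd_conv using pair_diff[of "2*i'" "2*i" "2*j'+1" "2*j+1"] by simp
  have "even v1 \<longleftrightarrow> even v2"
  proof (cases "i = i'")
    case True
    then show ?thesis using v(1,2) unfolding d1 d2 by (auto split: if_splits)
  next
    case False
    then have "v1 = 2*i" "v2 = 2*i'" using v(1,2) unfolding d1 d2 by (auto split: if_splits)
    then show ?thesis by simp
  qed
  then show False using cyc_parity[OF assms v(3)] by simp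
qed

lemma iso_empty:
  assumes "finite V1" "card V1 = m" "\<And>x y. x \<in> V1 \<Longrightarrow> y \<in> V1 \<Longrightarrow> \<not> E1 x y"
  shows "graph_iso V1 E1 (empty_V m) empty_E"
proof -
  have "card (empty_V m) = card V1" using assms by (simp add: empty_V_def)
  moreover have "finite (empty_V m)" by (simp add: empty_V_def)
  ultimately obtain f where "bij_betw f V1 (empty_V m)"
    using finite_same_card_bij[OF assms(1)] by metis
  then show ?thesis unfolding graph_iso_def empty_E_def using assms(3) by blast
qed


theorem theorem5p8:
  fixes n :: nat
  assumes "n \<ge> 3"
  shows "(odd n \<longrightarrow>
            graph_iso (min_skew_forcing_sets (cycle_V n) (cycle_E n)) skew_TE_edge
                      (complete_V n) complete_E
          \<and> graph_iso (min_skew_forcing_sets (cycle_V n) (cycle_E n)) (skew_TS_edge (cycle_E n))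
                      (cycle_V n) (cycle_E n))
       \<and> (even n \<longrightarrow>
            graph_iso (min_skew_forcing_sets (cycle_V n) (cycle_E n)) skew_TE_edge
                      (cart_V (complete_V (n div 2)) (complete_V (n div 2))) (cart_E complete_E complete_E)
          \<and> graph_iso (min_skew_forcing_sets (cycle_V n) (cycle_E n)) (skew_TS_edge (cycle_E n))
                      (empty_V (n^2 div 4)) empty_E)"
proof (intro conjI impI)
  assume o: "odd n"
  have b: "bij_betw (\<lambda>v. {v}) {0..<n} (min_skew_forcing_sets (cycle_V n) (cycle_E n))"
    unfolding odd_M[OF assms o] by (rule bij_betw_imageI) (auto simp: inj_on_def)
  show "graph_iso (min_skew_forcing_sets (cycle_V n) (cycle_E n)) skew_TE_edge (complete_V n) complete_E"
    by (rule iso_rev[OF b[folded complete_V_def]]) (simp add: TE_single complete_E_def)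
  show "graph_iso (min_skew_forcing_sets (cycle_V n) (cycle_E n)) (skew_TS_edge (cycle_E n)) (cycle_V n) (cycle_E n)"
    by (rule iso_rev[OF b[folded cycle_V_def]]) (auto simp: TS_single cycle_V_def dest: cyc_irrefl[OF assms])
next
  assume e: "even n"
  have b: "bij_betw pairmap ({0..<n div 2} \<times> {0..<n div 2}) (min_skew_forcing_sets (cycle_V n) (cycle_E n))"
    unfolding even_M[OF assms e] by (rule bij_betw_imageI) (rule pairmap_inj, rule refl)
  show "graph_iso (min_skew_forcing_sets (cycle_V n) (cycle_E n)) skew_TE_edge
      (cart_V (complete_V (n div 2)) (complete_V (n div 2))) (cart_E complete_E complete_E)"
  proof (rule iso_rev)
    show "bij_betw pairmap (cart_V (complete_V (n div 2)) (complete_V (n div 2))) (min_skew_forcing_sets (cycle_V n) (cycle_E n))"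
      using b by (simp add: cart_V_def complete_V_def)
    fix x y show "skew_TE_edge (pairmap x) (pairmap y) \<longleftrightarrow> cart_E complete_E complete_E x y" by (rule TE_pair)
  qed
  have c: "card (min_skew_forcing_sets (cycle_V n) (cycle_E n)) = n^2 div 4"
  proof -
    have "card (min_skew_forcing_sets (cycle_V n) (cycle_E n)) = (n div 2) * (n div 2)"
      using bij_betw_same_card[OF b] by simp
    also have "\<dots> = n^2 div 4" using e by (auto simp: power2_eq_square elim!: evenE)
    finally show ?thesis .
  qed
  have f: "finite (min_skew_forcing_sets (cycle_V n) (cycle_E n))"
    using bij_betw_finite[OF b] by simp
  show "graph_iso (min_skew_forcing_sets (cycle_V n) (cycle_E n)) (skew_TS_edge (cycle_E n))
      (empty_V (n^2 div 4)) empty_E"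
  proof (rule iso_empty[OF f c])
    fix x y assume "x \<in> min_skew_forcing_sets (cycle_V n) (cycle_E n)" "y \<in> min_skew_forcing_sets (cycle_V n) (cycle_E n)"
    then show "\<not> skew_TS_edge (cycle_E n) x y"
      unfolding even_M[OF assms e] using TS_pair[OF e assms] by auto
  qed
qed

end
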